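(* Let $\gamma,\lambda\in\mathbb{C}$ and let $\phi:\mathbb{Z}^2\to\mathbb{C}$ be a (generic, nonvanishing) solution of \[ \frac{\big(\gamma\widetilde{\overline\phi}+\lambda\phi\big)\big(\overline\phi-\gamma\widetilde\phi\big)}{\big(\widetilde{\overline\phi}-\overline\phi\big)\big(\widetilde\phi-\phi\big)}=1-\gamma^2. \] Then \[ u=\frac{\phi-\widetilde\phi}{\gamma\phi-\overline\phi},\qquad v=\frac{\overline\phi}{\phi} \] satisfy respectively the lattice sine-Gordon equation $\frac{\widetilde{\overline u}}{u}=\frac{(\gamma\widetilde u-1)(\gamma-\overline u)}{(\gamma-\widetilde u)(\gamma\overline u-1)}$ and the equation \[ \begin{aligned} &\gamma^2\big(v-\widetilde{\overline v}\big)\big(\overline v-\widetilde v\big)\big(\lambda+v\overline v\big)\big(\lambda+\widetilde v\widetilde{\overline v}\big)-(1-\gamma^2)(\gamma^2-\lambda)\big(v\overline v-\widetilde v\widetilde{\overline v}\big)^2\\ &\quad+\gamma(1-\gamma^2)\big(v\overline v-\widetilde v\widetilde{\overline v}\big)\Big(\big(\lambda+v\overline v\big)\big(\widetilde v+\widetilde{\overline v}\big)-\big(v+\overline v\big)\big(\lambda+\widetilde v\widetilde{\overline v}\big)\Big)=0. \end{aligned} \]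
   Context: Shift notation: for $f:\mathbb{Z}^2\to\mathbb{C}$, $f=f_{l,m}$, $\overline f=f_{l+1,m}$, $\widetilde f=f_{l,m+1}$, $\widetilde{\overline f}=f_{l+1,m+1}$. *)

theory Defs
  imports Complex_Main
begin

text \<open>Lattice fields are functions phi :: int => int => complex, with
  phi l m = f_{l,m}; the shifts are bar f = f (l+1) m, tilde f = f l (m+1).\<close>

end

theory Submission
  imports Defs
begin

lemma vpoly:
  fixes g L a b c d e f :: complex
  assumes E1: "(g*d + L*a)*(b - g*c) = (1-g^2)*(d-b)*(c-a)"
  and E2: "(g*f + L*b)*(e - g*d) = (1-g^2)*(f-e)*(d-b)"
  shows "g^2*(b*d - a*f)*(e*c - b*d)*(L*a+e)*(L*c+f)
     - (1-g^2)*(g^2-L)*(e*c-f*a)^2*b*d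
     + g*(1-g^2)*(e*c-f*a)*((L*a+e)*(d*d+f*c)*b - (b*b+e*a)*(L*c+f)*d) = 0"
  using E1 E2 by algebra

lemma upoly:
  fixes g L p00 p10 p20 p01 p11 p21 p02 p12 p22 :: complex
  assumes E00: "(g*p11 + L*p00)*(p10 - g*p01) = (1-g^2)*(p11-p10)*(p01-p00)"
  and E10: "(g*p21 + L*p10)*(p20 - g*p11) = (1-g^2)*(p21-p20)*(p11-p10)"
  and E01: "(g*p12 + L*p01)*(p11 - g*p02) = (1-g^2)*(p12-p11)*(p02-p01)"
  and E11: "(g*p22 + L*p11)*(p21 - g*p12) = (1-g^2)*(p22-p21)*(p12-p11)"
  shows "(p11-p12)*(g*(g*p01-p11) - (p01-p02))*(g*(p10-p11) - (g*p10-p20))*(g*p00-p10)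
       = (p00-p01)*(g*(p01-p02) - (g*p01-p11))*(g*(g*p10-p20) - (p10-p11))*(g*p11-p21)"
  using E00 E10 E01 E11 by algebra

theorem mainTheorem12:
  fixes \<gamma> lam :: complex
    and \<phi> u v :: "int \<Rightarrow> int \<Rightarrow> complex"
  defines "u \<equiv> (\<lambda>l m. (\<phi> l m - \<phi> l (m+1)) / (\<gamma> * \<phi> l m - \<phi> (l+1) m))"
    and "v \<equiv> (\<lambda>l m. \<phi> (l+1) m / \<phi> l m)"
  assumes nonvanishing: "\<And>l m. \<phi> l m \<noteq> 0"
    and gen1: "\<And>l m. \<phi> (l+1) (m+1) - \<phi> (l+1) m \<noteq> 0"
    and gen2: "\<And>l m. \<phi> l (m+1) - \<phi> l m \<noteq> 0"
    and gen3: "\<And>l m. \<gamma> * \<phi> l m - \<phi> (l+1) m \<noteq> 0"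
    and gen4: "\<And>l m. \<gamma> - u l m \<noteq> 0"
    and gen5: "\<And>l m. \<gamma> * u l m - 1 \<noteq> 0"
    and eq: "\<And>l m. ((\<gamma> * \<phi> (l+1) (m+1) + lam * \<phi> l m) * (\<phi> (l+1) m - \<gamma> * \<phi> l (m+1)))
                     / ((\<phi> (l+1) (m+1) - \<phi> (l+1) m) * (\<phi> l (m+1) - \<phi> l m)) = 1 - \<gamma>\<^sup>2"
  shows "(\<forall>l m. u (l+1) (m+1) / u l m
            = ((\<gamma> * u l (m+1) - 1) * (\<gamma> - u (l+1) m)) / ((\<gamma> - u l (m+1)) * (\<gamma> * u (l+1) m - 1)))
       \<and> (\<forall>l m.
            \<gamma>\<^sup>2 * (v l m - v (l+1) (m+1)) * (v (l+1) m - v l (m+1))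
               * (lam + v l m * v (l+1) m) * (lam + v l (m+1) * v (l+1) (m+1))
            - (1 - \<gamma>\<^sup>2) * (\<gamma>\<^sup>2 - lam) * (v l m * v (l+1) m - v l (m+1) * v (l+1) (m+1))\<^sup>2
            + \<gamma> * (1 - \<gamma>\<^sup>2) * (v l m * v (l+1) m - v l (m+1) * v (l+1) (m+1))
               * ((lam + v l m * v (l+1) m) * (v l (m+1) + v (l+1) (m+1))
                  - (v l m + v (l+1) m) * (lam + v l (m+1) * v (l+1) (m+1))) = 0)"
proof -
  have E: "\<And>l m. (\<gamma> * \<phi> (l+1) (m+1) + lam * \<phi> l m) * (\<phi> (l+1) m - \<gamma> * \<phi> l (m+1))
      = (1 - \<gamma>\<^sup>2) * (\<phi> (l+1) (m+1) - \<phi> (l+1) m) * (\<phi> l (m+1) - \<phi> l m)"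
  proof -
    fix l m
    have "(\<phi> (l+1) (m+1) - \<phi> (l+1) m) * (\<phi> l (m+1) - \<phi> l m) \<noteq> 0" using gen1 gen2 by simp
    with eq[of l m] show "?thesis l m" by (simp add: divide_eq_eq mult.assoc)
  qed
  have part1: "u (l+1) (m+1) / u l m
            = ((\<gamma> * u l (m+1) - 1) * (\<gamma> - u (l+1) m)) / ((\<gamma> - u l (m+1)) * (\<gamma> * u (l+1) m - 1))" for l m
  proof -
    have Q: "(\<phi> (l+1) (m+1) - \<phi> (l+1) (m+2)) * (\<gamma>*(\<gamma>*\<phi> l (m+1) - \<phi> (l+1) (m+1)) - (\<phi> l (m+1) - \<phi> l (m+2)))
          * (\<gamma>*(\<phi> (l+1) m - \<phi> (l+1) (m+1)) - (\<gamma>*\<phi> (l+1) m - \<phi> (l+2) m)) * (\<gamma>*\<phi> l m - \<phi> (l+1) m)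
       = (\<phi> l m - \<phi> l (m+1)) * (\<gamma>*(\<phi> l (m+1) - \<phi> l (m+2)) - (\<gamma>*\<phi> l (m+1) - \<phi> (l+1) (m+1)))
          * (\<gamma>*(\<gamma>*\<phi> (l+1) m - \<phi> (l+2) m) - (\<phi> (l+1) m - \<phi> (l+1) (m+1))) * (\<gamma>*\<phi> (l+1) (m+1) - \<phi> (l+2) (m+1))"
      apply (rule upoly[where L=lam])
      using E[of l m] E[of "l+1" m] E[of l "m+1"] E[of "l+1" "m+1"]
      by (simp_all add: add.assoc)
    define x00 where "x00 = u l m"
    define x10 where "x10 = u (l+1) m"
    define x01 where "x01 = u l (m+1)"
    define x11 where "x11 = u (l+1) (m+1)"
    define D00 where "D00 = \<gamma>*\<phi> l m - \<phi> (l+1) m"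
    define D10 where "D10 = \<gamma>*\<phi> (l+1) m - \<phi> (l+2) m"
    define D01 where "D01 = \<gamma>*\<phi> l (m+1) - \<phi> (l+1) (m+1)"
    define D11 where "D11 = \<gamma>*\<phi> (l+1) (m+1) - \<phi> (l+2) (m+1)"
    have nD: "D00 \<noteq> 0" "D10 \<noteq> 0" "D01 \<noteq> 0" "D11 \<noteq> 0"
      unfolding D00_def D10_def D01_def D11_def using gen3[of l m] gen3[of "l+1" m] gen3[of l "m+1"] gen3[of "l+1" "m+1"]
      by (simp_all add: add.assoc)
    have h00: "\<phi> l m - \<phi> l (m+1) = x00 * D00" unfolding x00_def D00_def u_def using gen3[of l m] by simp
    have h10: "\<phi> (l+1) m - \<phi> (l+1) (m+1) = x10 * D10" unfolding x10_def D10_def u_def using gen3[of "l+1" m] by (simp add: add.assoc)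
    have h01: "\<phi> l (m+1) - \<phi> l (m+2) = x01 * D01" unfolding x01_def D01_def u_def using gen3[of l "m+1"] by (simp add: add.assoc)
    have h11: "\<phi> (l+1) (m+1) - \<phi> (l+1) (m+2) = x11 * D11" unfolding x11_def D11_def u_def using gen3[of "l+1" "m+1"] by (simp add: add.assoc)
    have Q2: "(x11*(\<gamma> - x01)*(\<gamma>*x10 - 1)) * (D00*D01*D10*D11) = (x00*(\<gamma>*x01-1)*(\<gamma>-x10)) * (D00*D01*D10*D11)"
      using Q h00 h10 h01 h11 unfolding D00_def D10_def D01_def D11_def by algebra
    have Q3: "x11*(\<gamma> - x01)*(\<gamma>*x10 - 1) = x00*(\<gamma>*x01-1)*(\<gamma>-x10)"
      using Q2 nD by simp
    have nz: "x00 \<noteq> 0" "\<gamma> - x01 \<noteq> 0" "\<gamma>*x10 - 1 \<noteq> 0"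
      using h00 gen2[of l m] gen4[of l "m+1"] gen5[of "l+1" m] unfolding x01_def x10_def by auto
    have "x11 / x00 = ((\<gamma>*x01-1)*(\<gamma>-x10)) / ((\<gamma> - x01)*(\<gamma>*x10 - 1))"
    proof -
      have "(\<gamma> - x01)*(\<gamma>*x10 - 1) \<noteq> 0" using nz by simp
      then show ?thesis using Q3 nz(1) by (simp add: frac_eq_eq mult.commute mult.left_commute)
    qed
    then show ?thesis unfolding x00_def x01_def x10_def x11_def .
  qed
  have part2: "\<gamma>\<^sup>2 * (v l m - v (l+1) (m+1)) * (v (l+1) m - v l (m+1))
               * (lam + v l m * v (l+1) m) * (lam + v l (m+1) * v (l+1) (m+1))
            - (1 - \<gamma>\<^sup>2) * (\<gamma>\<^sup>2 - lam) * (v l m * v (l+1) m - v l (m+1) * v (l+1) (m+1))\<^sup>2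
            + \<gamma> * (1 - \<gamma>\<^sup>2) * (v l m * v (l+1) m - v l (m+1) * v (l+1) (m+1))
               * ((lam + v l m * v (l+1) m) * (v l (m+1) + v (l+1) (m+1))
                  - (v l m + v (l+1) m) * (lam + v l (m+1) * v (l+1) (m+1))) = 0" for l m
  proof -
    define a where "a = \<phi> l m"
    define b where "b = \<phi> (l+1) m"
    define e where "e = \<phi> (l+2) m"
    define c where "c = \<phi> l (m+1)"
    define d where "d = \<phi> (l+1) (m+1)"
    define f where "f = \<phi> (l+2) (m+1)"
    define V00 where "V00 = v l m"
    define V10 where "V10 = v (l+1) m"
    define V01 where "V01 = v l (m+1)"
    define V11 where "V11 = v (l+1) (m+1)"
    have nz: "a \<noteq> 0" "b \<noteq> 0" "c \<noteq> 0" "d \<noteq> 0" unfolding a_def b_def c_def d_def using nonvanishing by auto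
    have hv: "b = V00 * a" "e = V10 * b" "d = V01 * c" "f = V11 * d"
      unfolding V00_def V10_def V01_def V11_def v_def a_def b_def c_def d_def e_def f_def
      using nonvanishing by (simp_all add: add.assoc)
    have P: "\<gamma>^2*(b*d - a*f)*(e*c - b*d)*(lam*a+e)*(lam*c+f)
     - (1-\<gamma>^2)*(\<gamma>^2-lam)*(e*c-f*a)^2*b*d
     + \<gamma>*(1-\<gamma>^2)*(e*c-f*a)*((lam*a+e)*(d*d+f*c)*b - (b*b+e*a)*(lam*c+f)*d) = 0"
      apply (rule vpoly)
      using E[of l m] E[of "l+1" m] unfolding a_def b_def c_def d_def e_def f_def
      by (simp_all add: add.assoc)
    define G where "G = \<gamma>\<^sup>2 * (V00 - V11) * (V10 - V01)
               * (lam + V00 * V10) * (lam + V01 * V11)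
            - (1 - \<gamma>\<^sup>2) * (\<gamma>\<^sup>2 - lam) * (V00 * V10 - V01 * V11)\<^sup>2
            + \<gamma> * (1 - \<gamma>\<^sup>2) * (V00 * V10 - V01 * V11)
               * ((lam + V00 * V10) * (V01 + V11)
                  - (V00 + V10) * (lam + V01 * V11))"
    have "G * (a*a*b*c*c*d) = 0"
      using P hv unfolding G_def by algebra
    then have "G = 0" using nz by simp
    then show ?thesis unfolding G_def V00_def V10_def V01_def V11_def .
  qed
  show ?thesis using part1 part2 by blast
qed

end
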